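(* Let $\delta>0$ be a real number and $d$ a positive integer. There exists a positive integer $M(\delta,d)$ with the following property. Let $P(x)=\sum_{k=1}^d\alpha_kx^k$ be a real polynomial of degree $d$ such that for every sufficiently large $N$ and for every $\eta=(\eta_1,\ldots,\eta_N)\in\mathbb R^N$ with $\|\eta\|_\infty\le\delta$ we have \[D_N\bigl(P(1)+\eta_1,P(2)+\eta_2,\ldots,P(N)+\eta_N\bigr)>4\delta.\] Then for all sufficiently large $N$, for every $k\in[1,d]$ there exist integers $p_k,q_k$ with $\gcd(p_k,q_k)=1$, $1\le q_k\le M(\delta,d)$ and \[\Bigl|\alpha_k-\frac{p_k}{q_k}\Bigr|\le N^{-\frac{(k+2)!}{2(d+2)!}}.\]
   Context: For real numbers $x_1,\ldots,x_N$, the discrepancy is $D_N(x_1,\ldots,x_N)=\sup_{I}\bigl|\frac1N\sum_{n=1}^N\chi_I(\{x_n\})-\lambda(I)\bigr|$, where the supremum is over intervals $I=[a,b)\subset[0,1)$, $\chi_I$ is the indicator function of $I$, $\lambda(I)=b-a$, and $\{x\}=x-\lfloor x\rfloor$ is the fractional part. $\|\eta\|_\infty=\max_n|\eta_n|$. *)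

theory Defs
  imports "HOL-Analysis.Analysis"
begin

definition discrepancy :: "nat \<Rightarrow> (nat \<Rightarrow> real) \<Rightarrow> real" where
  "discrepancy N x =
     (SUP ab \<in> {(a, b). 0 \<le> a \<and> a \<le> b \<and> b \<le> (1::real)}.
        \<bar>real (card {n \<in> {1..N}. frac (x n) \<in> {fst ab..<snd ab}}) / real N
          - (snd ab - fst ab)\<bar>)"

end

theory Submission
  imports Defs "HOL-Computational_Algebra.Polynomial"
begin
lemma coeff_comp_deg1:
  fixes p q :: "real poly"
  assumes "degree q = 1" "degree p \<le> k"
  shows "coeff (p \<circ>\<^sub>p q) k = coeff p k * coeff q 1 ^ k \<and> degree (p \<circ>\<^sub>p q) \<le> k"
proof (cases "degree p = k")
  case True
  then show ?thesis using lead_coeff_comp[of q p] assms by (simp add: degree_pcompose)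
next
  case False
  then have "degree p < k" using assms by simp
  then show ?thesis using assms by (simp add: degree_pcompose coeff_eq_0)
qed

lemma coeff_lin_pow: "coeff ([:a, 1:] ^ Suc k) k = real (Suc k) * (a::real)"
proof (induct k)
  case 0 then show ?case by simp
next
  case (Suc k)
  have "[:a, 1:] ^ Suc (Suc k) = smult a ([:a, 1:] ^ Suc k) + pCons 0 ([:a, 1:] ^ Suc k)"
    by (simp del: power_Suc add: power_Suc[of _ "Suc k"])
  then have "coeff ([:a, 1:] ^ Suc (Suc k)) (Suc k) = a * coeff ([:a, 1:] ^ Suc k) (Suc k) + coeff ([:a, 1:] ^ Suc k) k"
    by simp
  also have "\<dots> = a + real (Suc k) * a" using Suc coeff_linear_power[of a "Suc k"] by simp
  finally show ?case by (simp add: algebra_simps)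
qed

lemma pcompose_pow_X: "([:0, 1:] ^ n) \<circ>\<^sub>p q = (q::real poly) ^ n"
  by (induct n) (simp_all add: pcompose_mult pcompose_1 pcompose_pCons)

lemma coeff_shift:
  fixes p :: "real poly"
  assumes "degree p \<le> Suc k"
  shows "coeff (p \<circ>\<^sub>p [:a, 1:]) k = coeff p k + real (Suc k) * a * coeff p (Suc k)"
    "coeff (p \<circ>\<^sub>p [:a, 1:]) (Suc k) = coeff p (Suc k)"
    "degree (p \<circ>\<^sub>p [:a, 1:]) \<le> Suc k"
proof -
  define c where "c = coeff p (Suc k)"
  define p0 where "p0 = p - monom c (Suc k)"
  have dp0: "degree p0 \<le> k"
  proof (rule degree_le, intro allI impI)
    fix i assume "k < i"
    then show "coeff p0 i = 0" using assms unfolding p0_def c_def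
      by (cases "i = Suc k") (auto simp: coeff_eq_0)
  qed
  have pe: "p = p0 + monom c (Suc k)" unfolding p0_def by simp
  have m: "monom c (Suc k) \<circ>\<^sub>p [:a, 1:] = smult c ([:a, 1:] ^ Suc k)"
    by (simp only: monom_altdef pcompose_smult pcompose_pow_X)
  have d1: "degree [:a, 1::real:] = 1" by simp
  have A: "coeff (p0 \<circ>\<^sub>p [:a, 1:]) k = coeff p0 k" "degree (p0 \<circ>\<^sub>p [:a, 1:]) \<le> k"
    using coeff_comp_deg1[OF d1 dp0] by auto
  have B: "coeff (p0 \<circ>\<^sub>p [:a, 1:]) (Suc k) = 0" using A(2) by (simp add: coeff_eq_0)
  have dpow: "degree ([:a, 1::real:] ^ Suc k) \<le> Suc k"
    by (metis degree_linear_power order_refl)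
  have "coeff p0 k = coeff p k" unfolding p0_def by simp
  have e: "p \<circ>\<^sub>p [:a, 1:] = p0 \<circ>\<^sub>p [:a, 1:] + smult c ([:a, 1:] ^ Suc k)"
    by (subst pe) (simp only: pcompose_add m)
  have "coeff (p \<circ>\<^sub>p [:a, 1:]) k = coeff (p0 \<circ>\<^sub>p [:a, 1:]) k + c * coeff ([:a, 1:] ^ Suc k) k"
    unfolding e coeff_add coeff_smult ..
  also have "\<dots> = coeff p k + real (Suc k) * a * coeff p (Suc k)"
    using A(1) \<open>coeff p0 k = coeff p k\<close> coeff_lin_pow[of a k] unfolding c_def by (simp only: mult_ac)
  finally show "coeff (p \<circ>\<^sub>p [:a, 1:]) k = coeff p k + real (Suc k) * a * coeff p (Suc k)" .
  have "coeff (p \<circ>\<^sub>p [:a, 1:]) (Suc k) = coeff (p0 \<circ>\<^sub>p [:a, 1:]) (Suc k) + c * coeff ([:a, 1:] ^ Suc k) (Suc k)"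
    unfolding e coeff_add coeff_smult ..
  then show "coeff (p \<circ>\<^sub>p [:a, 1:]) (Suc k) = coeff p (Suc k)"
    using B coeff_linear_power[of a "Suc k"] unfolding c_def by simp
  have d2: "degree (smult c ([:a, 1::real:] ^ Suc k)) \<le> Suc k"
    using dpow degree_smult_le order_trans by blast
  show "degree (p \<circ>\<^sub>p [:a, 1:]) \<le> Suc k"
    unfolding e using A(2) d2 degree_add_le by (metis le_SucI)
qed

definition e :: "real \<Rightarrow> complex" where "e x = cis (2 * pi * x)"
definition S :: "nat \<Rightarrow> (real \<Rightarrow> real) \<Rightarrow> complex" where
  "S N f = (\<Sum>n=1..N. e (f (real n))) / of_nat N"
definition ratM :: "nat \<Rightarrow> real set" where
  "ratM M = {x. \<exists>a b::int. 1 \<le> b \<and> b \<le> int M \<and> x = of_int a / of_int b}"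

lemma e_add: "e (x + y) = e x * e y"
  by (simp add: e_def cis_mult distrib_left)

lemma norm_e [simp]: "norm (e x) = 1"
  by (simp add: e_def)

lemma e_int: "z \<in> \<int> \<Longrightarrow> e z = 1"
  unfolding e_def by (metis cis_multiple_2pi)

lemma e_plus_int: "z \<in> \<int> \<Longrightarrow> e (y + z) = e y"
  by (simp add: e_add e_int)

lemma e_cnj: "e x * cnj (e y) = e (x - y)"
  by (simp add: e_def cis_cnj cis_mult right_diff_distrib)

lemma e_zero [simp]: "e 0 = 1"
  by (simp add: e_def)

lemma e_pow: "e x ^ n = e (real n * x)"
proof -
  have "e x ^ n = cis (real n * (2 * pi * x))" unfolding e_def
    by (induct n) (simp_all add: cis_mult algebra_simps)
  also have "\<dots> = e (real n * x)" unfolding e_def by (simp add: mult_ac)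
  finally show ?thesis .
qed

lemma e_eq_1: "e x = 1 \<Longrightarrow> x \<in> \<int>"
proof -
  assume "e x = 1"
  then have "cos (2 * pi * x) = 1" unfolding e_def
    by (metis Re_complex_of_real Re_rcis cis_rcis_eq mult_1 one_complex.sel(1))
  then obtain n :: int where "2 * pi * x = real_of_int n * 2 * pi"
    using cos_one_2pi_int[of "2 * pi * x"] by blast
  then have "x = n" by simp
  then show ?thesis by simp
qed

lemma geom_bound:
  fixes z :: complex
  assumes "norm z = 1" "z \<noteq> 1"
  shows "norm (\<Sum>n=1..N. z ^ n) \<le> 2 / norm (1 - z)"
proof -
  have eq: "(1 - z) * (\<Sum>n=1..N. z ^ n) = z - z ^ Suc N"
  proof (induct N)
    case 0 then show ?case by simp
  next
    case (Suc N)
    have "(\<Sum>n=1..Suc N. z ^ n) = (\<Sum>n=1..N. z ^ n) + z ^ Suc N" by (simp add: sum.cl_ivl_Suc)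
    then have "(1 - z) * (\<Sum>n=1..Suc N. z ^ n) = (1 - z) * (\<Sum>n=1..N. z ^ n) + (1 - z) * z ^ Suc N"
      by (simp add: distrib_left)
    also have "\<dots> = z - z ^ Suc (Suc N)" using Suc by (simp add: algebra_simps)
    finally show ?case .
  qed
  have "norm (1 - z) * norm (\<Sum>n=1..N. z ^ n) = norm (z - z ^ Suc N)"
    by (metis eq norm_mult)
  also have "\<dots> \<le> norm z + norm (z ^ Suc N)" by (rule norm_triangle_ineq4)
  also have "\<dots> = 2" using assms by (simp add: norm_power norm_mult)
  finally have fin: "norm (1 - z) * norm (\<Sum>n=1..N. z ^ n) \<le> 2" .
  have pos: "norm (1 - z) > 0" using assms(2) by simp
  show ?thesis unfolding pos_le_divide_eq[OF pos] using fin by (subst mult.commute)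
qed

lemma ratM_mono: "M \<le> M' \<Longrightarrow> ratM M \<subseteq> ratM M'"
  unfolding ratM_def by force

lemma Ints_ratM1: "x \<in> \<int> \<Longrightarrow> x \<in> ratM 1"
proof -
  assume "x \<in> \<int>"
  then obtain z where "x = of_int z" by (auto elim: Ints_cases)
  then have "1 \<le> (1::int) \<and> 1 \<le> int 1 \<and> x = of_int z / of_int 1" by simp
  then show ?thesis unfolding ratM_def by blast
qed

lemma ratM_mult:
  assumes "c \<noteq> 0" "x * of_int c \<in> ratM M"
  shows "x \<in> ratM (M * nat \<bar>c\<bar>)"
proof -
  obtain a b :: int where ab: "1 \<le> b" "b \<le> int M" "x * of_int c = of_int a / of_int b"
    using assms(2) unfolding ratM_def by auto
  have "x = of_int (sgn c * a) / of_int (b * \<bar>c\<bar>)"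
    using ab(3) assms(1) ab(1)
    by (auto simp: field_simps abs_if sgn_if)
  moreover have "1 \<le> b * \<bar>c\<bar>"
  proof -
    have "1 \<le> \<bar>c\<bar>" using assms(1) by arith
    then show ?thesis using ab(1) mult_mono[of 1 b 1 "\<bar>c\<bar>"] by simp
  qed
  moreover have "b * \<bar>c\<bar> \<le> int (M * nat \<bar>c\<bar>)" using ab(2) by (simp add: mult_right_mono)
  ultimately show ?thesis unfolding ratM_def by blast
qed

lemma ratM_mult_nat:
  assumes "c > 0" "x * real c \<in> ratM M"
  shows "x \<in> ratM (M * c)"
  using ratM_mult[of "int c" x M] assms by simp

lemma sum_shift1: "(\<Sum>n=1..N. g (Suc n)) = (\<Sum>n=1..N. g n) - g 1 + (g (Suc N) :: complex)"
proof (induct N)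
  case 0 then show ?case by simp
next
  case (Suc N)
  then show ?case by (simp add: sum.cl_ivl_Suc)
qed

lemma norm3: "norm (x - y + z) \<le> norm x + norm y + norm (z::'a::real_normed_vector)"
  using norm_triangle_ineq[of "x - y" z] norm_triangle_ineq4[of x y] by linarith

lemma sum_shift_bound:
  assumes "\<And>n. norm (u n :: complex) \<le> 1"
  shows "norm ((\<Sum>n=1..N. u (n + a)) - (\<Sum>n=1..N. u n)) \<le> 2 * real a"
proof (induct a)
  case 0 then show ?case by simp
next
  case (Suc a)
  have "(\<Sum>n=1..N. u (n + Suc a)) = (\<Sum>n=1..N. u (Suc n + a))" by simp
  also have "\<dots> = (\<Sum>n=1..N. u (n + a)) - u (1 + a) + u (Suc N + a)"
    using sum_shift1[of "\<lambda>n. u (n + a)" N] by simp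
  finally have eq: "(\<Sum>n=1..N. u (n + Suc a)) - (\<Sum>n=1..N. u n)
      = ((\<Sum>n=1..N. u (n + a)) - (\<Sum>n=1..N. u n)) - u (1 + a) + u (Suc N + a)" by simp
  have "norm (((\<Sum>n=1..N. u (n + a)) - (\<Sum>n=1..N. u n)) - u (1 + a) + u (Suc N + a))
      \<le> norm ((\<Sum>n=1..N. u (n + a)) - (\<Sum>n=1..N. u n)) + norm (u (1 + a)) + norm (u (Suc N + a))"
    by (rule norm3)
  also have "\<dots> \<le> 2 * real a + 1 + 1" using Suc assms by (intro add_mono) auto
  finally have bnd: "norm (((\<Sum>n=1..N. u (n + a)) - (\<Sum>n=1..N. u n)) - u (1 + a) + u (Suc N + a)) \<le> 2 * real a + 1 + 1" .
  have "2 * real a + 1 + 1 = 2 * real (Suc a)" by simp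
  then show ?case unfolding eq using bnd by linarith
qed

lemma vdc:
  fixes f :: "real \<Rightarrow> real"
  assumes N: "N \<ge> 1" and H: "H \<ge> 1" and \<eta>0: "\<eta> \<ge> 0"
    and hyp: "\<forall>a<H. \<forall>b<H. a \<noteq> b \<longrightarrow> norm (S N (\<lambda>x. f (x + real a) - f (x + real b))) \<le> \<eta>"
  shows "norm (S N f) \<le> sqrt (1 / real H + \<eta>) + 2 * real H / real N"
proof -
  define u where "u n = e (f (real n))" for n
  have nu: "norm (u n) \<le> 1" for n by (simp add: u_def)
  define B where "B n = (\<Sum>a<H. u (n + a)) / of_nat H" for n
  have sumB: "(\<Sum>n=1..N. B n) = (\<Sum>a<H. \<Sum>n=1..N. u (n + a)) / of_nat H"
    unfolding B_def by (simp add: sum_divide_distrib[symmetric]) (rule disjI2, rule sum.swap)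
  have s1: "(\<Sum>a<H. (\<Sum>n=1..N. u n) - (\<Sum>n=1..N. u (n + a))) = of_nat H * (\<Sum>n=1..N. u n) - (\<Sum>a<H. \<Sum>n=1..N. u (n + a))"
    by (simp add: sum_subtractf)
  have "(\<Sum>n=1..N. u n) - (\<Sum>n=1..N. B n) = (\<Sum>a<H. (\<Sum>n=1..N. u n) - (\<Sum>n=1..N. u (n + a))) / of_nat H"
    unfolding s1 sumB using H by (simp add: diff_divide_distrib)
  then have "norm ((\<Sum>n=1..N. u n) - (\<Sum>n=1..N. B n)) = norm (\<Sum>a<H. (\<Sum>n=1..N. u n) - (\<Sum>n=1..N. u (n + a))) / real H"
    by (simp add: norm_divide)
  also have "\<dots> \<le> (\<Sum>a<H. 2 * real H) / real H"
  proof (intro divide_right_mono order_trans[OF norm_sum] sum_mono)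
    fix a assume "a \<in> {..<H}"
    then have "norm ((\<Sum>n=1..N. u n) - (\<Sum>n=1..N. u (n + a))) \<le> 2 * real a"
      using sum_shift_bound[where u=u and N=N and a=a] nu by (simp add: norm_minus_commute)
    then show "norm ((\<Sum>n=1..N. u n) - (\<Sum>n=1..N. u (n + a))) \<le> 2 * real H"
      using \<open>a \<in> {..<H}\<close> by simp
  qed simp
  also have "\<dots> = 2 * real H" using H by simp
  finally have err: "norm ((\<Sum>n=1..N. u n) - (\<Sum>n=1..N. B n)) \<le> 2 * real H" .
  have Bsq: "(norm (B n))\<^sup>2 = Re (\<Sum>a<H. \<Sum>b<H. e (f (real n + real a) - f (real n + real b))) / (real H)\<^sup>2" for n
  proof -
    have "complex_of_real ((norm (\<Sum>a<H. u (n + a)))\<^sup>2) = (\<Sum>a<H. u (n + a)) * cnj (\<Sum>b<H. u (n + b))"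
      by (rule complex_norm_square)
    also have "\<dots> = (\<Sum>a<H. \<Sum>b<H. u (n + a) * cnj (u (n + b)))"
      by (simp add: sum_product)
    also have "\<dots> = (\<Sum>a<H. \<Sum>b<H. e (f (real n + real a) - f (real n + real b)))"
      unfolding u_def by (simp add: e_cnj)
    finally have "(norm (\<Sum>a<H. u (n + a)))\<^sup>2 = Re (\<Sum>a<H. \<Sum>b<H. e (f (real n + real a) - f (real n + real b)))"
      by (metis Re_complex_of_real)
    then show ?thesis unfolding B_def by (simp add: norm_divide power_divide)
  qed
  have "(\<Sum>n=1..N. (norm (B n))\<^sup>2) = Re (\<Sum>a<H. \<Sum>b<H. \<Sum>n=1..N. e (f (real n + real a) - f (real n + real b))) / (real H)\<^sup>2"
  proof -
    have sw: "(\<Sum>n=1..N. \<Sum>a<H. \<Sum>b<H. e (f (real n + real a) - f (real n + real b)))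
       = (\<Sum>a<H. \<Sum>b<H. \<Sum>n=1..N. e (f (real n + real a) - f (real n + real b)))"
      by (rule trans[OF sum.swap], rule sum.cong[OF refl], rule sum.swap)
    show ?thesis unfolding Bsq sum_divide_distrib[symmetric] Re_sum[symmetric] sw ..
  qed
  also have "\<dots> \<le> (\<Sum>a<H. \<Sum>b<H. norm (\<Sum>n=1..N. e (f (real n + real a) - f (real n + real b)))) / (real H)\<^sup>2"
  proof (rule divide_right_mono)
    show "Re (\<Sum>a<H. \<Sum>b<H. \<Sum>n=1..N. e (f (real n + real a) - f (real n + real b)))
      \<le> (\<Sum>a<H. \<Sum>b<H. norm (\<Sum>n=1..N. e (f (real n + real a) - f (real n + real b))))"
      by (rule order_trans[OF complex_Re_le_cmod], rule order_trans[OF norm_sum], rule sum_mono, rule norm_sum)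
  qed simp
  also have "\<dots> \<le> (\<Sum>a<H. \<Sum>b<H. (if a = b then real N else real N * \<eta>)) / (real H)\<^sup>2"
  proof (intro divide_right_mono sum_mono)
    fix a b assume ab: "a \<in> {..<H}" "b \<in> {..<H}"
    show "norm (\<Sum>n=1..N. e (f (real n + real a) - f (real n + real b))) \<le> (if a = b then real N else real N * \<eta>)"
    proof (cases "a = b")
      case True then show ?thesis by simp
    next
      case False
      have "norm (S N (\<lambda>x. f (x + real a) - f (x + real b))) \<le> \<eta>" using hyp ab False by auto
      then have "norm (\<Sum>n=1..N. e (f (real n + real a) - f (real n + real b))) / real N \<le> \<eta>"
        unfolding S_def by (simp add: norm_divide)
      then show ?thesis using False N by (simp add: field_simps)
    qed
  qed simp
  also have "\<dots> \<le> (real H * real N + real H * real H * (real N * \<eta>)) / (real H)\<^sup>2"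
  proof (intro divide_right_mono)
    have "(\<Sum>a<H. \<Sum>b<H. (if a = b then real N else real N * \<eta>)) = (\<Sum>a<H. \<Sum>b<H. (if a = b then real N - real N * \<eta> else 0) + real N * \<eta>)"
      by (intro sum.cong refl) auto
    also have "\<dots> = (\<Sum>a<H. (real N - real N * \<eta>) + real H * (real N * \<eta>))"
    proof (rule sum.cong[OF refl])
      fix a assume "a \<in> {..<H}"
      then show "(\<Sum>b<H. (if a = b then real N - real N * \<eta> else 0) + real N * \<eta>) = (real N - real N * \<eta>) + real H * (real N * \<eta>)"
        by (simp add: sum.distrib)
    qed
    also have "\<dots> = real H * real N + real H * real H * (real N * \<eta>) - real H * (real N * \<eta>)"
      by (simp add: algebra_simps)
    also have "\<dots> \<le> real H * real N + real H * real H * (real N * \<eta>)"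
      using \<eta>0 by simp
    finally show "(\<Sum>a<H. \<Sum>b<H. (if a = b then real N else real N * \<eta>)) \<le> real H * real N + real H * real H * (real N * \<eta>)" .
  qed simp
  also have "\<dots> = real N * (1 / real H + \<eta>)" using H by (simp add: field_simps power2_eq_square)
  finally have sq: "(\<Sum>n=1..N. (norm (B n))\<^sup>2) \<le> real N * (1 / real H + \<eta>)" .
  have "(norm (\<Sum>n=1..N. B n))\<^sup>2 \<le> (\<Sum>n=1..N. norm (B n))\<^sup>2"
    by (intro power_mono norm_sum) auto
  also have "\<dots> \<le> (\<Sum>n=1..N. (norm (B n))\<^sup>2) * real N"
    using sum_squared_le_sum_of_squares[of "\<lambda>n. norm (B n)" "{1..N}"] by simp
  also have "\<dots> \<le> real N * (1 / real H + \<eta>) * real N" using sq by (intro mult_right_mono) auto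
  finally have "(norm (\<Sum>n=1..N. B n))\<^sup>2 \<le> (real N)\<^sup>2 * (1 / real H + \<eta>)" by (simp add: power2_eq_square mult_ac)
  then have "norm (\<Sum>n=1..N. B n) \<le> sqrt ((real N)\<^sup>2 * (1 / real H + \<eta>))"
    by (simp add: real_le_rsqrt)
  also have "\<dots> = real N * sqrt (1 / real H + \<eta>)" by (simp add: real_sqrt_mult)
  finally have nB: "norm (\<Sum>n=1..N. B n) \<le> real N * sqrt (1 / real H + \<eta>)" .
  have "norm (\<Sum>n=1..N. u n) \<le> norm (\<Sum>n=1..N. B n) + norm ((\<Sum>n=1..N. u n) - (\<Sum>n=1..N. B n))"
    using norm_triangle_ineq[of "\<Sum>n=1..N. B n" "(\<Sum>n=1..N. u n) - (\<Sum>n=1..N. B n)"] by simp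
  also have "\<dots> \<le> real N * sqrt (1 / real H + \<eta>) + 2 * real H" using nB err by simp
  finally have fin: "norm (\<Sum>n=1..N. u n) / real N \<le> (real N * sqrt (1 / real H + \<eta>) + 2 * real H) / real N"
    using N by (simp add: divide_right_mono)
  have eqS: "norm (S N f) = norm (\<Sum>n=1..N. u n) / real N"
    unfolding S_def u_def by (simp add: norm_divide)
  have eqR: "(real N * sqrt (1 / real H + \<eta>) + 2 * real H) / real N = sqrt (1 / real H + \<eta>) + 2 * real H / real N"
    using N by (simp add: add_divide_distrib)
  show ?thesis using fin unfolding eqS eqR .
qed

lemma poly_deg1: "degree (p::real poly) \<le> 1 \<Longrightarrow> poly p x = coeff p 0 + coeff p 1 * x"
proof -
  assume d: "degree p \<le> 1"
  have "p = [:coeff p 0, coeff p 1:]"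
  proof (rule poly_eqI)
    fix n show "coeff p n = coeff [:coeff p 0, coeff p 1:] n"
      using d by (cases n) (auto simp: coeff_pCons coeff_eq_0 split: nat.split)
  qed
  then have "poly p x = poly [:coeff p 0, coeff p 1:] x" by (rule arg_cong[where f="\<lambda>q. poly q x"])
  then show ?thesis by (simp add: mult.commute)
qed

lemma eventually_div_le:
  assumes "\<epsilon> > 0" "C \<ge> 0"
  shows "\<forall>\<^sub>F N in sequentially. C / real N \<le> \<epsilon>"
proof -
  have "C / real N \<le> \<epsilon>" if "N \<ge> nat \<lceil>C / \<epsilon>\<rceil> + 1" for N
  proof -
    have "C / \<epsilon> \<le> real N" using that by linarith
    then have "C \<le> \<epsilon> * real N" using assms by (simp add: field_simps)
    then show ?thesis using that assms by (simp add: field_simps)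
  qed
  then show ?thesis unfolding eventually_sequentially by blast
qed

lemma LC_base:
  assumes "\<epsilon> > 0" "degree p \<le> 1" "coeff p 1 \<notin> ratM 1"
  shows "\<forall>\<^sub>F N in sequentially. norm (S N (poly p)) \<le> \<epsilon>"
proof -
  define \<beta> where "\<beta> = coeff p 1"
  define c where "c = coeff p 0"
  have "\<beta> \<notin> \<int>" using assms(3) Ints_ratM1 unfolding \<beta>_def by blast
  then have ne: "e \<beta> \<noteq> 1" using e_eq_1 by blast
  define C where "C = 2 / norm (1 - e \<beta>)"
  have C0: "C \<ge> 0" unfolding C_def by simp
  have bnd: "norm (S N (poly p)) \<le> C / real N" for N
  proof -
    have "(\<Sum>n=1..N. e (poly p (real n))) = e c * (\<Sum>n=1..N. e \<beta> ^ n)"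
      using assms(2) by (simp add: poly_deg1 e_add e_pow sum_distrib_left c_def \<beta>_def mult.commute)
    then have "norm (\<Sum>n=1..N. e (poly p (real n))) \<le> C"
      using geom_bound[of "e \<beta>" N] ne unfolding C_def by (simp add: norm_mult)
    then show ?thesis unfolding S_def by (simp add: norm_divide divide_right_mono)
  qed
  have "\<forall>\<^sub>F N in sequentially. C / real N \<le> \<epsilon>" by (rule eventually_div_le[OF assms(1) C0])
  then show ?thesis
  proof (rule eventually_mono)
    fix N assume "C / real N \<le> \<epsilon>"
    then show "norm (S N (poly p)) \<le> \<epsilon>" using bnd[of N] by linarith
  qed
qed

lemma LC_step_poly:
  fixes p :: "real poly" and a b :: nat
  assumes "degree p \<le> Suc k"
  defines "q \<equiv> p \<circ>\<^sub>p [:real a, 1:] - p \<circ>\<^sub>p [:real b, 1:]"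
  shows "degree q \<le> k" "coeff q k = coeff p (Suc k) * of_int (int (Suc k) * (int a - int b))"
    "poly q = (\<lambda>x. poly p (x + real a) - poly p (x + real b))"
proof -
  note A = coeff_shift[OF assms(1), of "real a"]
  note B = coeff_shift[OF assms(1), of "real b"]
  show "degree q \<le> k"
  proof (rule degree_le, intro allI impI)
    fix i assume "k < i"
    show "coeff q i = 0"
    proof (cases "i = Suc k")
      case True then show ?thesis using A B unfolding q_def by simp
    next
      case False
      then have "Suc k < i" using \<open>k < i\<close> by simp
      then show ?thesis using A(3) B(3) unfolding q_def by (simp add: coeff_eq_0)
    qed
  qed
  show "coeff q k = coeff p (Suc k) * of_int (int (Suc k) * (int a - int b))"
    using A B unfolding q_def by (simp add: algebra_simps)
  show "poly q = (\<lambda>x. poly p (x + real a) - poly p (x + real b))"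
    unfolding q_def by (auto simp: poly_pcompose add.commute)
qed

lemma LC:
  assumes "1 \<le> k"
  shows "\<forall>\<epsilon>>0. \<exists>M\<ge>1. \<forall>p::real poly. degree p \<le> k \<and> coeff p k \<notin> ratM M \<longrightarrow>
            (\<forall>\<^sub>F N in sequentially. norm (S N (poly p)) \<le> \<epsilon>)"
  using assms
proof (induct k rule: nat_induct_at_least)
  case base
  then show ?case using LC_base by (metis order_refl)
next
  case (Suc k)
  show ?case
  proof (intro allI impI)
    fix \<epsilon> :: real assume \<epsilon>: "\<epsilon> > 0"
    define \<epsilon>' where "\<epsilon>' = \<epsilon>\<^sup>2 / 8"
    have \<epsilon>'0: "\<epsilon>' > 0" using \<epsilon> unfolding \<epsilon>'_def by simp
    obtain M' where M': "M' \<ge> 1" "\<forall>p::real poly. degree p \<le> k \<and> coeff p k \<notin> ratM M' \<longrightarrow>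
            (\<forall>\<^sub>F N in sequentially. norm (S N (poly p)) \<le> \<epsilon>')"
      using Suc(2) \<epsilon>'0 by blast
    define H where "H = nat \<lceil>8 / \<epsilon>\<^sup>2\<rceil> + 1"
    have H1: "H \<ge> 1" unfolding H_def by simp
    have "8 / \<epsilon>\<^sup>2 \<le> real H" unfolding H_def by linarith
    then have Hb: "1 / real H \<le> \<epsilon>'" using \<epsilon> H1 unfolding \<epsilon>'_def by (simp add: field_simps)
    define M where "M = M' * (Suc k * H)"
    have M1: "M \<ge> 1" using M'(1) H1 unfolding M_def by simp
    show "\<exists>M\<ge>1. \<forall>p::real poly. degree p \<le> Suc k \<and> coeff p (Suc k) \<notin> ratM M \<longrightarrow>
            (\<forall>\<^sub>F N in sequentially. norm (S N (poly p)) \<le> \<epsilon>)"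
    proof (intro exI[of _ M] conjI M1 allI impI)
      fix p :: "real poly" assume p: "degree p \<le> Suc k \<and> coeff p (Suc k) \<notin> ratM M"
      have ev1: "\<forall>\<^sub>F N in sequentially. \<forall>ab\<in>{..<H} \<times> {..<H}. fst ab \<noteq> snd ab \<longrightarrow>
          norm (S N (\<lambda>x. poly p (x + real (fst ab)) - poly p (x + real (snd ab)))) \<le> \<epsilon>'"
      proof (rule eventually_ball_finite, simp, intro ballI)
        fix ab assume ab: "ab \<in> {..<H} \<times> {..<H}"
        obtain a b where abe: "ab = (a, b)" by fastforce
        have a: "a < H" "b < H" using ab abe by auto
        show "\<forall>\<^sub>F N in sequentially. fst ab \<noteq> snd ab \<longrightarrow>
          norm (S N (\<lambda>x. poly p (x + real (fst ab)) - poly p (x + real (snd ab)))) \<le> \<epsilon>'"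
        proof (cases "a = b")
          case True then show ?thesis using abe by simp
        next
          case False
          define q where "q = p \<circ>\<^sub>p [:real a, 1:] - p \<circ>\<^sub>p [:real b, 1:]"
          note Q = LC_step_poly[of p k a b, folded q_def]
          define c where "c = int (Suc k) * (int a - int b)"
          have c0: "c \<noteq> 0" using False unfolding c_def by simp
          have "nat \<bar>c\<bar> \<le> Suc k * H"
          proof -
            have "\<bar>int a - int b\<bar> \<le> int H" using a by linarith
            then have "\<bar>c\<bar> \<le> int (Suc k) * int H" 
              using mult_left_mono[of "\<bar>int a - int b\<bar>" "int H" "int (Suc k)"] unfolding c_def abs_mult by simp
            then have "\<bar>c\<bar> \<le> int (Suc k * H)" by (simp only: of_nat_mult)
            then show ?thesis by (simp only: nat_le_iff)
          qed
          then have sub: "ratM (M' * nat \<bar>c\<bar>) \<subseteq> ratM M" unfolding M_def by (intro ratM_mono) simp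
          have "coeff q k \<notin> ratM M'"
          proof
            assume "coeff q k \<in> ratM M'"
            then have "coeff p (Suc k) * of_int c \<in> ratM M'" using Q(2) p unfolding c_def by simp
            then have "coeff p (Suc k) \<in> ratM M" using ratM_mult[OF c0] sub by blast
            then show False using p by simp
          qed
          then have "\<forall>\<^sub>F N in sequentially. norm (S N (poly q)) \<le> \<epsilon>'" using M'(2) Q(1) p by blast
          then show ?thesis using Q(3) p abe by simp
        qed
      qed
      have ev2: "\<forall>\<^sub>F N in sequentially. 2 * real H / real N \<le> \<epsilon> / 2 \<and> N \<ge> 1"
        using eventually_div_le[of "\<epsilon> / 2" "2 * real H"] \<epsilon> eventually_ge_at_top[of 1]
        by (auto intro: eventually_conj)
      show "\<forall>\<^sub>F N in sequentially. norm (S N (poly p)) \<le> \<epsilon>"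
        using ev1 ev2
      proof (eventually_elim)
        case (elim N)
        have hyp: "\<forall>a<H. \<forall>b<H. a \<noteq> b \<longrightarrow> norm (S N (\<lambda>x. poly p (x + real a) - poly p (x + real b))) \<le> \<epsilon>'"
          using elim(1) by auto
        have "norm (S N (poly p)) \<le> sqrt (1 / real H + \<epsilon>') + 2 * real H / real N"
          using vdc[OF _ H1 _ hyp] elim(2) \<epsilon>'0 by simp
        also have "sqrt (1 / real H + \<epsilon>') \<le> sqrt ((\<epsilon> / 2)\<^sup>2)"
          using Hb unfolding \<epsilon>'_def by (intro real_sqrt_le_mono) (simp add: power2_eq_square field_simps)
        also have "\<dots> = \<epsilon> / 2" using \<epsilon> by simp
        finally show ?case using elim(2) by simp
      qed
    qed
  qed
qed

lemma int_term:
  assumes "\<alpha> \<in> ratM B" "(n::nat) mod fact B = r mod fact B"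
  shows "\<alpha> * (real n ^ j - real r ^ j) \<in> \<int>"
proof -
  obtain a b :: int where ab: "1 \<le> b" "b \<le> int B" "\<alpha> = of_int a / of_int b"
    using assms(1) unfolding ratM_def by auto
  have "nat b dvd fact B" using ab by (intro dvd_fact) auto
  then have "int (nat b) dvd int (fact B)" by (simp only: int_dvd_int_iff)
  then have "b dvd int (fact B)" using ab(1) by simp
  then obtain t where t: "int (fact B) = b * t" by (auto elim: dvdE)
  have "(n ^ j) mod fact B = ((n mod fact B) ^ j) mod fact B" by (simp add: power_mod)
  also have "\<dots> = ((r mod fact B) ^ j) mod fact B" using assms(2) by simp
  also have "\<dots> = (r ^ j) mod fact B" by (simp add: power_mod)
  finally have "int (n ^ j) mod int (fact B) = int (r ^ j) mod int (fact B)"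
    by (metis of_nat_mod)
  then have "int (fact B) dvd int (n ^ j) - int (r ^ j)" by (simp only: mod_eq_dvd_iff)
  then obtain s where s: "int (n ^ j) - int (r ^ j) = int (fact B) * s" by (auto elim: dvdE)
  have "real n ^ j - real r ^ j = of_int (int (n ^ j) - int (r ^ j))" by simp
  also have "\<dots> = of_int b * of_int (t * s)" unfolding s t by simp
  finally have "\<alpha> * (real n ^ j - real r ^ j) = of_int a * of_int (t * s)"
    using ab(1) unfolding ab(3) by simp
  then show ?thesis by (metis Ints_mult Ints_of_int)
qed

lemma regroup:
  fixes u :: "nat \<Rightarrow> complex"
  shows "(\<Sum>n=1..L*M. u n) = (\<Sum>r=1..L. \<Sum>m=1..M. u (L*(m-1)+r))"
proof (induct M)
  case 0 then show ?case by simp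
next
  case (Suc M)
  have un: "{1..L * Suc M} = {1..L*M} \<union> {L*M+1..L*M+L}" by auto
  have "(\<Sum>n=1..L * Suc M. u n) = (\<Sum>n=1..L*M. u n) + (\<Sum>n=L*M+1..L*M+L. u n)"
    unfolding un by (rule sum.union_disjoint) auto
  also have "(\<Sum>n=L*M+1..L*M+L. u n) = (\<Sum>r=1..L. u (r + L*M))"
    using sum.shift_bounds_cl_nat_ivl[of u 1 "L*M" L] by (simp add: add.commute)
  also have "(\<Sum>n=1..L*M. u n) = (\<Sum>r=1..L. \<Sum>m=1..M. u (L*(m-1)+r))" by (rule Suc)
  finally have "(\<Sum>n=1..L * Suc M. u n) = (\<Sum>r=1..L. (\<Sum>m=1..M. u (L*(m-1)+r)) + u (r + L*M))"
    by (simp add: sum.distrib)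
  also have "\<dots> = (\<Sum>r=1..L. \<Sum>m=1..Suc M. u (L*(m-1)+r))"
    by (rule sum.cong[OF refl]) (simp add: add.commute)
  finally show ?case .
qed

lemma tail_bound:
  fixes u :: "nat \<Rightarrow> complex"
  assumes "\<And>n. norm (u n) \<le> 1" "L \<ge> 1"
  shows "norm ((\<Sum>n=1..N. u n) - (\<Sum>n=1..L*(N div L). u n)) \<le> real L"
proof -
  define K where "K = L * (N div L)"
  have KN: "K \<le> N" unfolding K_def by simp
  have NK: "N - K < L" unfolding K_def using assms(2)
    by (metis minus_mult_div_eq_mod mod_less_divisor mult.commute not_one_le_zero neq0_conv)
  have un: "{1..N} = {1..K} \<union> {K+1..N}" using KN by auto
  have "(\<Sum>n=1..N. u n) = (\<Sum>n=1..K. u n) + (\<Sum>n=K+1..N. u n)"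
    unfolding un by (rule sum.union_disjoint) auto
  then have "norm ((\<Sum>n=1..N. u n) - (\<Sum>n=1..K. u n)) = norm (\<Sum>n=K+1..N. u n)" by simp
  also have "\<dots> \<le> (\<Sum>n=K+1..N. 1)" by (rule order_trans[OF norm_sum sum_mono]) (use assms in auto)
  also have "\<dots> = real (N - K)" by simp
  also have "\<dots> \<le> real L" using NK by simp
  finally show ?thesis unfolding K_def .
qed

definition plow :: "(nat \<Rightarrow> real) \<Rightarrow> nat \<Rightarrow> real poly" where
  "plow \<alpha> k = (\<Sum>j\<in>{1..k}. monom (\<alpha> j) j)"

lemma plow_props:
  "degree (plow \<alpha> k) \<le> k" "coeff (plow \<alpha> k) k = (if k \<ge> 1 then \<alpha> k else 0)"
  "poly (plow \<alpha> k) x = (\<Sum>j=1..k. \<alpha> j * x ^ j)"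
proof -
  show "degree (plow \<alpha> k) \<le> k" unfolding plow_def
    by (rule degree_sum_le) (auto intro: order_trans[OF degree_monom_le])
  show "coeff (plow \<alpha> k) k = (if k \<ge> 1 then \<alpha> k else 0)" unfolding plow_def
    by (simp add: coeff_sum)
  show "poly (plow \<alpha> k) x = (\<Sum>j=1..k. \<alpha> j * x ^ j)" unfolding plow_def
    by (simp add: poly_sum poly_monom)
qed

lemma AC:
  assumes "\<epsilon> > 0"
  shows "\<exists>M\<ge>1. \<forall>\<alpha>::nat\<Rightarrow>real. (\<exists>k\<in>{1..d}. \<alpha> k \<notin> ratM M) \<longrightarrow>
     (\<forall>\<^sub>F N in sequentially. norm (S N (\<lambda>x. \<Sum>k=1..d. \<alpha> k * x ^ k)) \<le> \<epsilon>)"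
proof -
  have e2: "\<epsilon> / 2 > 0" using assms by simp
  have "\<forall>k\<in>{1..d}. \<exists>M. M \<ge> 1 \<and> (\<forall>p::real poly. degree p \<le> k \<and> coeff p k \<notin> ratM M \<longrightarrow>
            (\<forall>\<^sub>F N in sequentially. norm (S N (poly p)) \<le> \<epsilon> / 2))"
  proof (intro ballI)
    fix k :: nat assume "k \<in> {1..d}"
    then have k1: "1 \<le> k" by simp
    show "\<exists>M. M \<ge> 1 \<and> (\<forall>p::real poly. degree p \<le> k \<and> coeff p k \<notin> ratM M \<longrightarrow>
            (\<forall>\<^sub>F N in sequentially. norm (S N (poly p)) \<le> \<epsilon> / 2))"
      using LC[OF k1] e2 by blast
  qed
  then obtain mlc where mlc: "\<forall>k\<in>{1..d}. mlc k \<ge> 1 \<and> (\<forall>p::real poly. degree p \<le> k \<and> coeff p k \<notin> ratM (mlc k) \<longrightarrow>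
            (\<forall>\<^sub>F N in sequentially. norm (S N (poly p)) \<le> \<epsilon> / 2))"
    by (metis bchoice)
  define g where "g B = (\<Sum>k=1..d. mlc k) * fact B ^ d" for B :: nat
  define m where "m = rec_nat (1::nat) (\<lambda>i r. max r (g r))"
  have m0: "m 0 = 1" unfolding m_def by simp
  have mS: "m (Suc i) = max (m i) (g (m i))" for i unfolding m_def by simp
  have inc: "incseq m" by (rule incseq_SucI) (simp add: mS)
  have mmono: "i \<le> j \<Longrightarrow> m i \<le> m j" for i j using inc by (simp add: incseq_def)
  have m1: "m i \<ge> 1" for i using mmono[of 0 i] m0 by simp
  define th where "th k = m (d + 1 - k)" for k
  define M where "M = m d"
  show ?thesis
  proof (intro exI[of _ M] conjI allI impI)
    show "M \<ge> 1" unfolding M_def using m1 by simp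
    fix \<alpha> :: "nat \<Rightarrow> real" assume "\<exists>k\<in>{1..d}. \<alpha> k \<notin> ratM M"
    then obtain k0 where k0: "k0 \<in> {1..d}" "\<alpha> k0 \<notin> ratM M" by blast
    define K where "K = {k\<in>{1..d}. \<alpha> k \<notin> ratM (th k)}"
    have "th k0 \<le> M" unfolding th_def M_def using k0(1) by (intro mmono) auto
    then have "k0 \<in> K" unfolding K_def using k0 ratM_mono by blast
    have finK: "finite K" unfolding K_def by simp
    define k where "k = Max K"
    have kK: "k \<in> K" unfolding k_def using finK \<open>k0 \<in> K\<close> by (intro Max_in) auto
    then have k1: "1 \<le> k" "k \<le> d" and ak: "\<alpha> k \<notin> ratM (th k)" unfolding K_def by auto
    define B where "B = m (d - k)"
    have high: "\<alpha> j \<in> ratM B" if "j \<in> {Suc k..d}" for j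
    proof -
      have "j \<notin> K"
      proof
        assume "j \<in> K"
        then have "j \<le> k" unfolding k_def using finK by (intro Max_ge)
        then show False using that by simp
      qed
      then have "\<alpha> j \<in> ratM (th j)" using that k1 unfolding K_def by auto
      moreover have "th j \<le> B" unfolding th_def B_def using that by (intro mmono) auto
      ultimately show ?thesis using ratM_mono by blast
    qed
    define L where "L = (fact B :: nat)"
    have L1: "L \<ge> 1" unfolding L_def by simp
    have "th k = m (Suc (d - k))" unfolding th_def using k1 by (simp add: Suc_diff_le)
    then have thg: "g B \<le> th k" unfolding B_def by (simp add: mS)
    have "mlc k \<le> (\<Sum>k=1..d. mlc k)" using k1 by (intro member_le_sum) auto
    moreover have "L ^ k \<le> L ^ d" using L1 k1 by (intro power_increasing) auto
    ultimately have "mlc k * L ^ k \<le> g B" unfolding g_def L_def by (intro mult_mono) auto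
    then have "ratM (mlc k * L ^ k) \<subseteq> ratM (th k)" using thg by (intro ratM_mono) simp
    then have "\<alpha> k \<notin> ratM (mlc k * L ^ k)" using ak by blast
    then have nr: "\<alpha> k * real (L ^ k) \<notin> ratM (mlc k)"
      using ratM_mult_nat[of "L ^ k" "\<alpha> k" "mlc k"] L1 by auto
    define C where "C r = (\<Sum>j=Suc k..d. \<alpha> j * real r ^ j)" for r :: nat
    define q where "q r = plow \<alpha> k \<circ>\<^sub>p [:real r - real L, real L:] + [:C r:]" for r :: nat
    have qprops: "degree (q r) \<le> k \<and> coeff (q r) k = \<alpha> k * real (L ^ k)" for r
    proof -
      have d1: "degree [:real r - real L, real L:] = 1" using L1 by simp
      note cc = coeff_comp_deg1[OF d1 plow_props(1)[of \<alpha> k]]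
      have "degree (q r) \<le> max (degree (plow \<alpha> k \<circ>\<^sub>p [:real r - real L, real L:])) (degree [:C r:])"
        unfolding q_def by (rule degree_add_le_max)
      then have "degree (q r) \<le> k" using cc by simp
      moreover have "coeff (q r) k = \<alpha> k * real (L ^ k)"
        unfolding q_def using cc k1 plow_props(2)[of \<alpha> k]
        by (cases k) (auto simp: of_nat_power)
      ultimately show ?thesis by simp
    qed
    have ev_r: "\<forall>r\<in>{1..L}. \<forall>\<^sub>F N' in sequentially. norm (S N' (poly (q r))) \<le> \<epsilon> / 2"
      using mlc k1 qprops nr by auto
    have ev: "\<forall>\<^sub>F N' in sequentially. \<forall>r\<in>{1..L}. norm (S N' (poly (q r))) \<le> \<epsilon> / 2"
      by (rule eventually_ball_finite[OF _ ev_r]) simp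
    then obtain N0 where N0: "\<And>N'. N' \<ge> N0 \<Longrightarrow> \<forall>r\<in>{1..L}. norm (S N' (poly (q r))) \<le> \<epsilon> / 2"
      unfolding eventually_sequentially by blast
    define Pf where "Pf x = (\<Sum>k=1..d. \<alpha> k * x ^ k)" for x :: real
    have ident: "e (Pf (real (L * (i - 1) + r))) = e (poly (q r) (real i))" if i: "i \<ge> 1" for i r
    proof -
      define n where "n = L * (i - 1) + r"
      have rn: "real r - real L + real L * real i = real n"
      proof -
        obtain i' where i': "i = Suc i'" using i by (cases i) auto
        show ?thesis unfolding n_def i' by (simp add: algebra_simps)
      qed
      have pq: "poly (q r) (real i) = (\<Sum>j=1..k. \<alpha> j * real n ^ j) + C r"
        unfolding q_def by (simp add: poly_pcompose plow_props(3) rn[symmetric] algebra_simps)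
      have un: "{1..d} = {1..k} \<union> {Suc k..d}" using k1 by auto
      have "Pf (real n) = (\<Sum>j=1..k. \<alpha> j * real n ^ j) + (\<Sum>j=Suc k..d. \<alpha> j * real n ^ j)"
        unfolding Pf_def un by (rule sum.union_disjoint) auto
      then have "Pf (real n) = poly (q r) (real i) + (\<Sum>j=Suc k..d. \<alpha> j * (real n ^ j - real r ^ j))"
        unfolding pq C_def by (simp add: sum_subtractf right_diff_distrib)
      moreover have "(\<Sum>j=Suc k..d. \<alpha> j * (real n ^ j - real r ^ j)) \<in> \<int>"
      proof (rule Ints_sum)
        fix j assume "j \<in> {Suc k..d}"
        moreover have "n mod fact B = r mod fact B" unfolding n_def L_def by simp
        ultimately show "\<alpha> j * (real n ^ j - real r ^ j) \<in> \<int>" using high int_term by blast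
      qed
      ultimately show ?thesis unfolding n_def by (simp add: e_plus_int)
    qed
    have blk: "norm (\<Sum>n=1..L*N'. e (Pf (real n))) \<le> real L * real N' * (\<epsilon> / 2)" if N': "N' \<ge> N0" "N' \<ge> 1" for N'
    proof -
      have "(\<Sum>n=1..L*N'. e (Pf (real n))) = (\<Sum>r=1..L. \<Sum>i=1..N'. e (Pf (real (L*(i-1)+r))))"
        by (rule regroup)
      also have "\<dots> = (\<Sum>r=1..L. \<Sum>i=1..N'. e (poly (q r) (real i)))"
        using ident by (intro sum.cong refl) auto
      finally have eq: "(\<Sum>n=1..L*N'. e (Pf (real n))) = (\<Sum>r=1..L. \<Sum>i=1..N'. e (poly (q r) (real i)))" .
      have "norm (\<Sum>r=1..L. \<Sum>i=1..N'. e (poly (q r) (real i))) \<le> (\<Sum>r=1..L. real N' * (\<epsilon> / 2))"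
      proof (rule order_trans[OF norm_sum sum_mono])
        fix r assume r: "r \<in> {1..L}"
        have "norm (\<Sum>i=1..N'. e (poly (q r) (real i))) = real N' * norm (S N' (poly (q r)))"
          unfolding S_def using N' by (simp add: norm_divide)
        also have "\<dots> \<le> real N' * (\<epsilon> / 2)" using N0[OF N'(1)] r by (intro mult_left_mono) auto
        finally show "norm (\<Sum>i=1..N'. e (poly (q r) (real i))) \<le> real N' * (\<epsilon> / 2)" .
      qed
      then show ?thesis unfolding eq by simp
    qed
    have evN: "\<forall>\<^sub>F N in sequentially. N \<ge> L * (N0 + 1) \<and> real L / real N \<le> \<epsilon> / 2"
      using eventually_ge_at_top[of "L * (N0 + 1)"] eventually_div_le[OF e2, of "real L"]
      by (auto intro: eventually_conj)
    show "\<forall>\<^sub>F N in sequentially. norm (S N (\<lambda>x. \<Sum>k=1..d. \<alpha> k * x ^ k)) \<le> \<epsilon>"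
      using evN
    proof (rule eventually_mono)
      fix N assume N: "N \<ge> L * (N0 + 1) \<and> real L / real N \<le> \<epsilon> / 2"
      define N' where "N' = N div L"
      have "(L * (N0 + 1)) div L \<le> N div L" using N by (intro div_le_mono) simp
      then have "N0 + 1 \<le> N'" unfolding N'_def using L1 by simp
      then have N'1: "N' \<ge> N0" "N' \<ge> 1" by auto
      have "1 \<le> L * (N0 + 1)" using L1 by simp
      then have N1: "N \<ge> 1" using N by linarith
      have LN: "real L * real N' \<le> real N"
      proof -
        have "L * (N div L) \<le> N" by (rule times_div_less_eq_dividend)
        then have "real (L * (N div L)) \<le> real N" by (simp only: of_nat_le_iff)
        then show ?thesis by (simp add: N'_def)
      qed
      have "norm (\<Sum>n=1..N. e (Pf (real n))) \<le> norm (\<Sum>n=1..L*N'. e (Pf (real n))) + norm ((\<Sum>n=1..N. e (Pf (real n))) - (\<Sum>n=1..L*N'. e (Pf (real n))))"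
        using norm_triangle_ineq[of "\<Sum>n=1..L*N'. e (Pf (real n))" "(\<Sum>n=1..N. e (Pf (real n))) - (\<Sum>n=1..L*N'. e (Pf (real n)))"] by simp
      also have "\<dots> \<le> real L * real N' * (\<epsilon> / 2) + real L"
        using blk[OF N'1] tail_bound[of "\<lambda>n. e (Pf (real n))" L N] L1 unfolding N'_def by (intro add_mono) auto
      also have "\<dots> \<le> real N * (\<epsilon> / 2) + real L" using LN e2 by (intro add_mono mult_right_mono) auto
      finally have fin: "norm (\<Sum>n=1..N. e (Pf (real n))) \<le> real N * (\<epsilon> / 2) + real L" .
      have "norm (S N Pf) = norm (\<Sum>n=1..N. e (Pf (real n))) / real N" unfolding S_def by (simp add: norm_divide)
      also have "\<dots> \<le> (real N * (\<epsilon> / 2) + real L) / real N" using fin by (intro divide_right_mono) auto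
      also have "\<dots> = \<epsilon> / 2 + real L / real N" using N1 by (simp add: add_divide_distrib)
      also have "\<dots> \<le> \<epsilon>" using conjunct2[OF N] by linarith
      finally show "norm (S N (\<lambda>x. \<Sum>k=1..d. \<alpha> k * x ^ k)) \<le> \<epsilon>" unfolding Pf_def[abs_def] .
    qed
  qed
qed

definition K :: "nat \<Rightarrow> real \<Rightarrow> real" where
  "K R u = (norm (\<Sum>j<R. e (real j * u)))\<^sup>2 / real R"

lemma K_nonneg: "K R u \<ge> 0"
  unfolding K_def by simp

lemma K_expand:
  "complex_of_real (K R u) = (\<Sum>j<R. \<Sum>j'<R. e ((real j - real j') * u)) / of_nat R"
proof -
  have "complex_of_real ((norm (\<Sum>j<R. e (real j * u)))\<^sup>2) = (\<Sum>j<R. e (real j * u)) * cnj (\<Sum>j'<R. e (real j' * u))"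
    by (rule complex_norm_square)
  also have "\<dots> = (\<Sum>j<R. \<Sum>j'<R. e (real j * u) * cnj (e (real j' * u)))"
    by (simp add: sum_product)
  also have "\<dots> = (\<Sum>j<R. \<Sum>j'<R. e ((real j - real j') * u))"
    by (simp add: e_cnj left_diff_distrib)
  finally show ?thesis unfolding K_def by simp
qed

lemma K_periodic: "K R (u + of_int z) = K R u"
proof -
  have "e (real j * (u + of_int z)) = e (real j * u)" for j
  proof -
    have "real j * (u + of_int z) = real j * u + of_int (int j * z)" by (simp add: algebra_simps)
    then show ?thesis by (simp add: e_plus_int)
  qed
  then show ?thesis unfolding K_def by simp
qed

lemma K_periodic': "K R (u - of_int z) = K R u"
  using K_periodic[of R u "- z"] by simp

lemma norm_one_minus_e_sq: "(norm (1 - e u))\<^sup>2 = 2 - 2 * cos (2 * pi * u)"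
proof -
  have "(norm (1 - e u))\<^sup>2 = (1 - cos (2 * pi * u))\<^sup>2 + (sin (2 * pi * u))\<^sup>2"
    unfolding cmod_power2 e_def by simp
  also have "\<dots> = 2 - 2 * cos (2 * pi * u)"
    using sin_cos_squared_add[of "2 * pi * u"] by (simp add: power2_eq_square algebra_simps)
  finally show ?thesis .
qed

lemma cos_bound:
  assumes "0 < \<rho>" "\<rho> \<le> 1/2" "\<rho> \<le> u" "u \<le> 1 - \<rho>"
  shows "cos (2 * pi * u) \<le> cos (2 * pi * \<rho>)"
proof (cases "u \<le> 1/2")
  case True
  then show ?thesis using assms by (intro cos_monotone_0_pi_le) auto
next
  case False
  have h1: "2 * pi * \<rho> \<le> 2 * pi * (1 - u)" using assms by (intro mult_left_mono) auto
  have h2: "2 * pi * (1 - u) \<le> pi" using False by (simp add: algebra_simps)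
  have "cos (2 * pi * (1 - u)) \<le> cos (2 * pi * \<rho>)"
    using assms h1 h2 by (intro cos_monotone_0_pi_le) auto
  moreover have "cos (2 * pi * (1 - u)) = cos (2 * pi * u)"
    using cos_2pi_minus[of "2 * pi * u"] by (simp add: algebra_simps)
  ultimately show ?thesis by simp
qed

lemma kappa_pos:
  assumes "0 < \<rho>" "\<rho> \<le> 1/2"
  shows "2 - 2 * cos (2 * pi * \<rho>) > 0"
proof -
  have "cos (2 * pi * \<rho>) < cos 0"
    using assms by (intro cos_monotone_0_pi) auto
  then show ?thesis by simp
qed

lemma K_tail:
  assumes R: "R \<ge> 1" and "0 < \<rho>" "\<rho> \<le> 1/2" "\<rho> \<le> u" "u \<le> 1 - \<rho>"
  shows "K R u \<le> 4 / (real R * (2 - 2 * cos (2 * pi * \<rho>)))"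
proof -
  define z where "z = e u"
  define \<kappa> where "\<kappa> = 2 - 2 * cos (2 * pi * \<rho>)"
  have \<kappa>: "\<kappa> > 0" unfolding \<kappa>_def using assms kappa_pos by simp
  have nz: "(norm (1 - z))\<^sup>2 \<ge> \<kappa>"
    unfolding z_def \<kappa>_def norm_one_minus_e_sq using cos_bound[OF assms(2-5)] by simp
  then have z1: "z \<noteq> 1" using \<kappa> by auto
  have nz0: "norm (1 - z) > 0" using z1 by simp
  have "(\<Sum>j<R. e (real j * u)) = (\<Sum>j<R. z ^ j)" unfolding z_def by (simp add: e_pow)
  also have "\<dots> = (1 - z ^ R) / (1 - z)" using z1 by (simp add: sum_gp_strict)
  finally have eq: "(\<Sum>j<R. e (real j * u)) = (1 - z ^ R) / (1 - z)" .
  have "norm (1 - z ^ R) \<le> 2"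
    using norm_triangle_ineq4[of 1 "z ^ R"] unfolding z_def by (simp add: norm_power)
  then have "norm (\<Sum>j<R. e (real j * u)) \<le> 2 / norm (1 - z)"
    unfolding eq norm_divide using nz0 by (intro divide_right_mono) auto
  then have "(norm (\<Sum>j<R. e (real j * u)))\<^sup>2 \<le> (2 / norm (1 - z))\<^sup>2"
    by (intro power_mono) auto
  also have "\<dots> = 4 / (norm (1 - z))\<^sup>2" by (simp add: power_divide)
  also have "\<dots> \<le> 4 / \<kappa>"
  proof -
    have nzp: "(norm (1 - z))\<^sup>2 > 0" using nz \<kappa> by linarith
    show ?thesis using nz \<kappa> mult_pos_pos[OF nzp \<kappa>] by (intro divide_left_mono) auto
  qed
  finally have "(norm (\<Sum>j<R. e (real j * u)))\<^sup>2 / real R \<le> (4 / \<kappa>) / real R"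
    using R by (intro divide_right_mono) auto
  then show ?thesis unfolding K_def \<kappa>_def by (simp add: mult.commute)
qed

lemma geo_e_zero:
  fixes c :: int
  assumes "c \<noteq> 0" "\<bar>c\<bar> < int R"
  shows "(\<Sum>i<R. e (real i * (of_int c / real R))) = 0"
proof -
  define w where "w = e (of_int c / real R)"
  have R0: "R > 0" using assms by simp
  have w1: "w \<noteq> 1"
  proof
    assume "w = 1"
    then have "of_int c / real R \<in> \<int>" unfolding w_def by (rule e_eq_1)
    then obtain z where z: "of_int c / real R = of_int z" by (auto elim: Ints_cases)
    then have "of_int c = of_int z * real R" using R0 by (simp add: field_simps)
    then have cz: "c = z * int R" by (metis of_int_eq_iff of_int_mult of_int_of_nat_eq)
    then have "z \<noteq> 0" using assms(1) by auto
    then have "\<bar>c\<bar> \<ge> int R" unfolding cz abs_mult by (simp add: mult_le_cancel_right1 abs_if)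
    then show False using assms(2) by simp
  qed
  have wR: "w ^ R = 1" unfolding w_def e_pow using R0 by (simp add: e_int)
  have "(\<Sum>i<R. e (real i * (of_int c / real R))) = (\<Sum>i<R. w ^ i)" unfolding w_def by (simp add: e_pow)
  also have "\<dots> = 0" using w1 wR by (simp add: sum_gp_strict)
  finally show ?thesis .
qed

lemma diag_bound:
  assumes "B \<ge> 0"
  shows "(\<Sum>a<H. \<Sum>b<H. if a = b then A else B) \<le> real H * A + real H * real H * (B::real)"
proof -
  have "(\<Sum>b<H. if a = b then A else B) \<le> A + real H * B" if "a < H" for a
  proof -
    have "(\<Sum>b<H. if a = b then A else B) \<le> (\<Sum>b<H. (if a = b then A else 0) + B)"
      using assms by (intro sum_mono) auto
    also have "\<dots> = A + real H * B" using that by (simp add: sum.distrib)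
    finally show ?thesis .
  qed
  then have "(\<Sum>a<H. \<Sum>b<H. if a = b then A else B) \<le> (\<Sum>a<H. A + real H * B)"
    by (intro sum_mono) auto
  also have "\<dots> = real H * A + real H * real H * B" by (simp add: algebra_simps)
  finally show ?thesis .
qed

lemma inner_geo:
  assumes "j < R" "j' < R"
  shows "(\<Sum>i<R. e (real i * (of_int (int j' - int j) / real R))) = (if j = j' then of_nat R else 0)"
proof (cases "j = j'")
  case True then show ?thesis by simp
next
  case False
  have "\<bar>int j' - int j\<bar> < int R" using assms by linarith
  then show ?thesis using geo_e_zero[of "int j' - int j" R] False by simp
qed

lemma K_partition:
  assumes R: "R \<ge> 1"
  shows "(\<Sum>i<R. K R (t - (of_int l0 + real i) / real R)) = real R"
proof -
  define X where "X j j' = e ((real j - real j') * (t - of_int l0 / real R))" for j j' :: nat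
  define Y where "Y i j j' = e (real i * (of_int (int j' - int j) / real R))" for i j j' :: nat
  have split: "e ((real j - real j') * (t - (of_int l0 + real i) / real R)) = X j j' * Y i j j'" for i j j'
  proof -
    have "(real j - real j') * (t - (of_int l0 + real i) / real R)
        = (real j - real j') * (t - of_int l0 / real R) + real i * (of_int (int j' - int j) / real R)"
      by (simp add: algebra_simps add_divide_distrib diff_divide_distrib)
    then show ?thesis unfolding X_def Y_def by (simp add: e_add)
  qed
  have "complex_of_real (\<Sum>i<R. K R (t - (of_int l0 + real i) / real R))
      = (\<Sum>i<R. (\<Sum>j<R. \<Sum>j'<R. X j j' * Y i j j') / of_nat R)"
    by (simp add: K_expand split)
  also have "\<dots> = (\<Sum>i<R. \<Sum>j<R. \<Sum>j'<R. X j j' * Y i j j') / of_nat R"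
    by (simp add: sum_divide_distrib)
  also have "(\<Sum>i<R. \<Sum>j<R. \<Sum>j'<R. X j j' * Y i j j') = (\<Sum>j<R. \<Sum>j'<R. \<Sum>i<R. X j j' * Y i j j')"
    by (rule trans[OF sum.swap], rule sum.cong[OF refl], rule sum.swap)
  also have "\<dots> = (\<Sum>j<R. \<Sum>j'<R. X j j' * (if j = j' then of_nat R else 0))"
  proof (intro sum.cong refl)
    fix j j' assume jj: "j \<in> {..<R}" "j' \<in> {..<R}"
    have "(\<Sum>i<R. X j j' * Y i j j') = X j j' * (\<Sum>i<R. Y i j j')" by (simp add: sum_distrib_left)
    also have "\<dots> = X j j' * (if j = j' then of_nat R else 0)"
      using inner_geo[of j R j'] jj unfolding Y_def by simp
    finally show "(\<Sum>i<R. X j j' * Y i j j') = X j j' * (if j = j' then of_nat R else 0)" .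
  qed
  also have "\<dots> = (\<Sum>j<R. of_nat R)"
  proof (intro sum.cong refl)
    fix j assume j: "j \<in> {..<R}"
    have "(\<Sum>j'<R. X j j' * (if j = j' then of_nat R else 0)) = (\<Sum>j'<R. if j = j' then X j j * of_nat R else 0)"
      by (intro sum.cong refl) auto
    also have "\<dots> = X j j * of_nat R" using j by simp
    also have "\<dots> = of_nat R" by (simp add: X_def)
    finally show "(\<Sum>j'<R. X j j' * (if j = j' then of_nat R else 0)) = of_nat R" .
  qed
  finally have "complex_of_real (\<Sum>i<R. K R (t - (of_int l0 + real i) / real R)) = of_nat R * of_nat R / of_nat R"
    by simp
  also have "\<dots> = complex_of_real (real R)" using R by simp
  finally show ?thesis by (simp only: of_real_eq_iff)
qed

lemma K_avg:
  assumes R: "R \<ge> 1" and \<eta>: "\<eta> \<ge> 0"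
    and hyp: "\<forall>h::int. 1 \<le> \<bar>h\<bar> \<and> \<bar>h\<bar> \<le> int R \<longrightarrow> norm (\<Sum>n=1..N. e (of_int h * x n)) \<le> real N * \<eta>"
  shows "(\<Sum>n=1..N. K R (x n - s)) \<le> real N * (1 + real R * \<eta>)"
proof -
  define D where "D j j' = real j - real j'" for j j' :: nat
  have split: "e ((real j - real j') * (x n - s)) = e (- D j j' * s) * e (D j j' * x n)" for j j' n
  proof -
    have "(real j - real j') * (x n - s) = - D j j' * s + D j j' * x n" unfolding D_def by (simp add: algebra_simps)
    then show ?thesis by (simp only: e_add)
  qed
  have "complex_of_real (\<Sum>n=1..N. K R (x n - s)) = (\<Sum>n=1..N. (\<Sum>j<R. \<Sum>j'<R. e (- D j j' * s) * e (D j j' * x n)) / of_nat R)"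
    by (simp add: K_expand split)
  also have "\<dots> = (\<Sum>n=1..N. \<Sum>j<R. \<Sum>j'<R. e (- D j j' * s) * e (D j j' * x n)) / of_nat R"
    by (simp add: sum_divide_distrib)
  also have "(\<Sum>n=1..N. \<Sum>j<R. \<Sum>j'<R. e (- D j j' * s) * e (D j j' * x n)) = (\<Sum>j<R. \<Sum>j'<R. \<Sum>n=1..N. e (- D j j' * s) * e (D j j' * x n))"
    by (rule trans[OF sum.swap], rule sum.cong[OF refl], rule sum.swap)
  also have "\<dots> = (\<Sum>j<R. \<Sum>j'<R. e (- D j j' * s) * (\<Sum>n=1..N. e (D j j' * x n)))"
    by (simp add: sum_distrib_left)
  finally have eq: "complex_of_real (\<Sum>n=1..N. K R (x n - s)) = (\<Sum>j<R. \<Sum>j'<R. e (- D j j' * s) * (\<Sum>n=1..N. e (D j j' * x n))) / of_nat R" .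
  have "(\<Sum>n=1..N. K R (x n - s)) = Re (complex_of_real (\<Sum>n=1..N. K R (x n - s)))" by simp
  also have "\<dots> \<le> norm (complex_of_real (\<Sum>n=1..N. K R (x n - s)))" by (rule complex_Re_le_cmod)
  also have "\<dots> = norm (\<Sum>j<R. \<Sum>j'<R. e (- D j j' * s) * (\<Sum>n=1..N. e (D j j' * x n))) / real R"
    unfolding eq by (simp add: norm_divide)
  also have "\<dots> \<le> (\<Sum>j<R. \<Sum>j'<R. norm (\<Sum>n=1..N. e (D j j' * x n))) / real R"
  proof (rule divide_right_mono)
    show "norm (\<Sum>j<R. \<Sum>j'<R. e (- D j j' * s) * (\<Sum>n=1..N. e (D j j' * x n))) \<le> (\<Sum>j<R. \<Sum>j'<R. norm (\<Sum>n=1..N. e (D j j' * x n)))"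
      by (rule order_trans[OF norm_sum], rule sum_mono, rule order_trans[OF norm_sum], rule sum_mono)
        (simp add: norm_mult)
  qed simp
  also have "\<dots> \<le> (\<Sum>j<R. \<Sum>j'<R. if j = j' then real N else real N * \<eta>) / real R"
  proof (rule divide_right_mono[OF sum_mono[OF sum_mono]])
    fix j j' assume jj: "j \<in> {..<R}" "j' \<in> {..<R}"
    show "norm (\<Sum>n=1..N. e (D j j' * x n)) \<le> (if j = j' then real N else real N * \<eta>)"
    proof (cases "j = j'")
      case True then show ?thesis by (simp add: D_def)
    next
      case False
      define h where "h = int j - int j'"
      have "D j j' = of_int h" unfolding D_def h_def by simp
      moreover have "1 \<le> \<bar>h\<bar> \<and> \<bar>h\<bar> \<le> int R" unfolding h_def using False jj by auto
      ultimately show ?thesis using hyp False by auto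
    qed
  qed simp
  also have "\<dots> \<le> (real R * real N + real R * real R * (real N * \<eta>)) / real R"
    using diag_bound[where B="real N * \<eta>" and H=R and A="real N"] \<eta> by (intro divide_right_mono) auto
  also have "\<dots> = real N * (1 + real R * \<eta>)" using R by (simp add: field_simps)
  finally show ?thesis .
qed

lemma card_le_X:
  fixes X :: real
  assumes "X \<ge> -1"
  shows "real (card {i\<in>{..<R}. real i \<le> X}) \<le> X + 1"
proof (cases "X < 0")
  case True
  then have E: "{i\<in>{..<R}. real i \<le> X} = {}" by auto
  show ?thesis unfolding E using assms by simp
next
  case False
  have sub: "{i\<in>{..<R}. real i \<le> X} \<subseteq> {..<nat (\<lfloor>X\<rfloor> + 1)}"
  proof
    fix i assume "i \<in> {i\<in>{..<R}. real i \<le> X}"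
    then have "real i \<le> X" by simp
    then have "int i \<le> \<lfloor>X\<rfloor>" by (simp add: le_floor_iff)
    then show "i \<in> {..<nat (\<lfloor>X\<rfloor> + 1)}" by simp
  qed
  have "card {i\<in>{..<R}. real i \<le> X} \<le> card {..<nat (\<lfloor>X\<rfloor> + 1)}"
    by (rule card_mono[OF _ sub]) simp
  then have "real (card {i\<in>{..<R}. real i \<le> X}) \<le> real (nat (\<lfloor>X\<rfloor> + 1))" by simp
  also have "\<dots> = of_int (\<lfloor>X\<rfloor> + 1)" using False by simp
  also have "\<dots> \<le> X + 1" by simp
  finally show ?thesis .
qed

lemma upper:
  assumes R: "R \<ge> 1" and N: "N \<ge> 1" and \<rho>: "0 < \<rho>" "\<rho> \<le> 1/2" and \<eta>: "\<eta> \<ge> 0"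
    and ab: "0 \<le> a" "a \<le> b" "b \<le> 1"
    and hyp: "\<forall>h::int. 1 \<le> \<bar>h\<bar> \<and> \<bar>h\<bar> \<le> int R \<longrightarrow> norm (\<Sum>n=1..N. e (of_int h * x n)) \<le> real N * \<eta>"
  shows "real (card {n\<in>{1..N}. frac (x n) \<in> {a..<b}})
     \<le> real N * (b - a + 2 * \<rho> + 1 / real R + real R * \<eta> + 4 / (real R * (2 - 2 * cos (2 * pi * \<rho>))))"
proof -
  define \<kappa> where "\<kappa> = 2 - 2 * cos (2 * pi * \<rho>)"
  have \<kappa>: "\<kappa> > 0" unfolding \<kappa>_def using kappa_pos \<rho> by simp
  define \<sigma> where "\<sigma> = 4 / (real R * \<kappa>)"
  have \<sigma>0: "\<sigma> \<ge> 0" unfolding \<sigma>_def using \<kappa> by simp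
  have R0: "real R > 0" using R by simp
  define l0 where "l0 = \<lceil>(a - \<rho>) * real R\<rceil>"
  define c where "c i = (of_int l0 + real i) / real R" for i :: nat
  define G where "G = {i\<in>{..<R}. of_int l0 + real i \<le> (b + \<rho>) * real R}"
  have l0a: "of_int l0 < (a - \<rho>) * real R + 1" "(a - \<rho>) * real R \<le> of_int l0"
    unfolding l0_def by linarith+
  have point: "(if t \<in> {a..<b} then 1 else 0) \<le> (\<Sum>i\<in>G. K R (t - c i)) / real R + \<sigma>" if t: "0 \<le> t" "t < 1" for t
  proof (cases "t \<in> {a..<b}")
    case False
    have z: "0 \<le> (\<Sum>i\<in>G. K R (t - c i)) / real R" using K_nonneg by (simp add: sum_nonneg)
    have "(if t \<in> {a..<b} then 1 else 0) = (0::real)" using False by simp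
    then show ?thesis using z \<sigma>0 by linarith
  next
    case True
    have part: "(\<Sum>i<R. K R (t - c i)) = real R" unfolding c_def using K_partition[OF R] by simp
    have GR: "G \<subseteq> {..<R}" unfolding G_def by auto
    have "(\<Sum>i<R. K R (t - c i)) = (\<Sum>i\<in>{..<R} - G. K R (t - c i)) + (\<Sum>i\<in>G. K R (t - c i))"
      by (rule sum.subset_diff[OF GR]) simp
    moreover have "(\<Sum>i\<in>{..<R} - G. K R (t - c i)) \<le> (\<Sum>i\<in>{..<R} - G. \<sigma>)"
    proof (rule sum_mono)
      fix i assume i: "i \<in> {..<R} - G"
      define u where "u = t - c i + 1"
      have "(b + \<rho>) * real R < of_int l0 + real i" using i unfolding G_def by auto
      then have ci1: "b + \<rho> < c i" unfolding c_def using R0 by (simp add: field_simps)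
      have "real i \<le> real R - 1" using i by auto
      then have "of_int l0 + real i < (a - \<rho>) * real R + real R" using l0a by linarith
      then have ci2: "c i < a - \<rho> + 1" unfolding c_def using R0 by (simp add: field_simps)
      have u1: "\<rho> \<le> u" "u \<le> 1 - \<rho>" unfolding u_def using ci1 ci2 True by auto
      have "K R (t - c i) = K R (u - of_int 1)" unfolding u_def by simp
      also have "\<dots> = K R u" by (rule K_periodic')
      also have "\<dots> \<le> \<sigma>" unfolding \<sigma>_def \<kappa>_def using K_tail[OF R \<rho> u1] .
      finally show "K R (t - c i) \<le> \<sigma>" .
    qed
    moreover have "(\<Sum>i\<in>{..<R} - G. \<sigma>) \<le> real R * \<sigma>"
    proof -
      have "card ({..<R} - G) \<le> card {..<R}" by (rule card_mono) auto
      then have "card ({..<R} - G) \<le> R" by simp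
      then show ?thesis using \<sigma>0 by (simp add: mult_right_mono)
    qed
    ultimately have "real R - real R * \<sigma> \<le> (\<Sum>i\<in>G. K R (t - c i))" using part by linarith
    then have "(real R - real R * \<sigma>) / real R \<le> (\<Sum>i\<in>G. K R (t - c i)) / real R"
      using R0 by (intro divide_right_mono) auto
    moreover have "(real R - real R * \<sigma>) / real R = 1 - \<sigma>" using R0 by (simp add: field_simps)
    ultimately show ?thesis using True by simp
  qed
  have "real (card {n\<in>{1..N}. frac (x n) \<in> {a..<b}}) = (\<Sum>n=1..N. if frac (x n) \<in> {a..<b} then 1 else 0)"
    by (simp add: sum.inter_filter[symmetric])
  also have "\<dots> \<le> (\<Sum>n=1..N. (\<Sum>i\<in>G. K R (x n - c i)) / real R + \<sigma>)"
  proof (rule sum_mono)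
    fix n
    have se: "(\<Sum>i\<in>G. K R (frac (x n) - c i)) = (\<Sum>i\<in>G. K R (x n - c i))"
    proof (rule sum.cong[OF refl])
      fix i
      have eq: "frac (x n) - c i = (x n - c i) - of_int \<lfloor>x n\<rfloor>" unfolding frac_def by simp
      show "K R (frac (x n) - c i) = K R (x n - c i)" unfolding eq by (rule K_periodic')
    qed
    then show "(if frac (x n) \<in> {a..<b} then 1 else 0) \<le> (\<Sum>i\<in>G. K R (x n - c i)) / real R + \<sigma>"
      using point[OF frac_ge_0[of "x n"] frac_lt_1[of "x n"]] unfolding se by blast
  qed
  also have "\<dots> = (\<Sum>i\<in>G. \<Sum>n=1..N. K R (x n - c i)) / real R + real N * \<sigma>"
  proof -
    have "(\<Sum>n=1..N. (\<Sum>i\<in>G. K R (x n - c i)) / real R + \<sigma>) = (\<Sum>n=1..N. (\<Sum>i\<in>G. K R (x n - c i))) / real R + real N * \<sigma>"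
      by (simp add: sum.distrib sum_divide_distrib[symmetric])
    also have "(\<Sum>n=1..N. (\<Sum>i\<in>G. K R (x n - c i))) = (\<Sum>i\<in>G. \<Sum>n=1..N. K R (x n - c i))"
      by (rule sum.swap)
    finally show ?thesis .
  qed
  also have "\<dots> \<le> (\<Sum>i\<in>G. real N * (1 + real R * \<eta>)) / real R + real N * \<sigma>"
    using K_avg[OF R \<eta> hyp] R0 by (intro add_mono divide_right_mono sum_mono) auto
  also have "\<dots> = real N * (real (card G) / real R + real (card G) * \<eta>) + real N * \<sigma>"
    using R0 by (simp add: field_simps)
  also have "\<dots> \<le> real N * ((b - a + 2 * \<rho>) + 1 / real R + real R * \<eta>) + real N * \<sigma>"
  proof -
    define X where "X = (b + \<rho>) * real R - of_int l0"
    have GX: "G = {i\<in>{..<R}. real i \<le> X}" unfolding G_def X_def by (auto simp: algebra_simps)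
    have "(b - a + 2 * \<rho>) * real R \<ge> 0" using ab \<rho> R0 by simp
    then have "X \<ge> -1" unfolding X_def using l0a by (simp add: algebra_simps)
    then have "real (card G) \<le> X + 1" unfolding GX by (rule card_le_X)
    also have "\<dots> \<le> (b - a + 2 * \<rho>) * real R + 1" unfolding X_def using l0a by (simp add: algebra_simps)
    finally have cG: "real (card G) \<le> (b - a + 2 * \<rho>) * real R + 1" .
    then have c1: "real (card G) / real R \<le> (b - a + 2 * \<rho>) + 1 / real R"
      using R0 by (simp add: field_simps)
    have "card G \<le> R" using card_mono[of "{..<R}" G] unfolding G_def by auto
    then have c2: "real (card G) * \<eta> \<le> real R * \<eta>" using \<eta> by (simp add: mult_right_mono)
    show ?thesis using c1 c2 N by (intro add_mono mult_left_mono) auto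
  qed
  also have "\<dots> = real N * (b - a + 2 * \<rho> + 1 / real R + real R * \<eta> + 4 / (real R * (2 - 2 * cos (2 * pi * \<rho>))))"
    unfolding \<sigma>_def \<kappa>_def by (simp add: algebra_simps)
  finally show ?thesis .
qed

lemma disc_main:
  assumes "\<delta> > 0"
  shows "\<exists>R\<ge>1. \<exists>\<eta>>0. \<forall>N\<ge>1. \<forall>x::nat\<Rightarrow>real.
    (\<forall>h::int. 1 \<le> \<bar>h\<bar> \<and> \<bar>h\<bar> \<le> int R \<longrightarrow> norm (\<Sum>n=1..N. e (of_int h * x n)) \<le> real N * \<eta>)
    \<longrightarrow> discrepancy N x \<le> 4 * \<delta>"
proof -
  define \<delta>0 where "\<delta>0 = min \<delta> (1/8)"
  have d0: "\<delta>0 > 0" "\<delta>0 \<le> \<delta>" "\<delta>0 \<le> 1/8" unfolding \<delta>0_def using assms by auto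
  define \<rho> where "\<rho> = \<delta>0 / 4"
  have \<rho>: "0 < \<rho>" "\<rho> \<le> 1/2" unfolding \<rho>_def using d0 by auto
  define \<kappa> where "\<kappa> = 2 - 2 * cos (2 * pi * \<rho>)"
  have \<kappa>: "\<kappa> > 0" unfolding \<kappa>_def using kappa_pos \<rho> by simp
  define R where "R = nat \<lceil>4 / \<delta>0 + 16 / (\<kappa> * \<delta>0)\<rceil> + 1"
  have R1: "R \<ge> 1" unfolding R_def by simp
  have R0: "real R > 0" using R1 by simp
  have Rge: "4 / \<delta>0 + 16 / (\<kappa> * \<delta>0) \<le> real R" unfolding R_def by linarith
  have p1: "4 / \<delta>0 \<ge> 0" "16 / (\<kappa> * \<delta>0) \<ge> 0" using d0 \<kappa> by auto
  have b1: "1 / real R \<le> \<delta>0 / 4"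
  proof -
    have "4 / \<delta>0 \<le> real R" using Rge p1 by linarith
    then have "4 \<le> real R * \<delta>0" using d0 by (simp add: field_simps)
    then show ?thesis using R0 by (simp add: field_simps)
  qed
  have b2: "4 / (real R * \<kappa>) \<le> \<delta>0 / 4"
  proof -
    have "16 / (\<kappa> * \<delta>0) \<le> real R" using Rge p1 by linarith
    then have "16 \<le> real R * (\<kappa> * \<delta>0)" using d0 \<kappa> by (simp add: field_simps)
    then show ?thesis using R0 \<kappa> by (simp add: field_simps)
  qed
  define \<eta> where "\<eta> = \<delta>0 / (4 * real R)"
  have \<eta>: "\<eta> > 0" unfolding \<eta>_def using d0 R0 by simp
  have b3: "real R * \<eta> = \<delta>0 / 4" unfolding \<eta>_def using R0 by simp
  define \<gamma> where "\<gamma> = 2 * \<rho> + 1 / real R + real R * \<eta> + 4 / (real R * \<kappa>)"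
  have "\<gamma> = \<delta>0 / 2 + 1 / real R + \<delta>0 / 4 + 4 / (real R * \<kappa>)" unfolding \<gamma>_def \<rho>_def b3 by simp
  then have \<gamma>: "2 * \<gamma> \<le> 4 * \<delta>" using b1 b2 d0 by linarith
  show ?thesis
  proof (intro exI[of _ R] conjI R1 exI[of _ \<eta>] \<eta> allI impI)
    fix N :: nat and x :: "nat \<Rightarrow> real"
    assume N: "N \<ge> 1"
      and hyp: "\<forall>h::int. 1 \<le> \<bar>h\<bar> \<and> \<bar>h\<bar> \<le> int R \<longrightarrow> norm (\<Sum>n=1..N. e (of_int h * x n)) \<le> real N * \<eta>"
    define cnt where "cnt a b = real (card {n\<in>{1..N}. frac (x n) \<in> {a..<b}})" for a b :: real
    have up: "cnt a b \<le> real N * (b - a + \<gamma>)" if "0 \<le> a" "a \<le> b" "b \<le> 1" for a b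
      using upper[OF R1 N \<rho> less_imp_le[OF \<eta>] that hyp] unfolding cnt_def \<gamma>_def \<kappa>_def by (simp add: algebra_simps)
    have part: "cnt 0 a + cnt a b + cnt b 1 = real N" if ab: "0 \<le> a" "a \<le> b" "b \<le> 1" for a b
    proof -
      define A1 where "A1 = {n\<in>{1..N}. frac (x n) \<in> {0..<a}}"
      define A2 where "A2 = {n\<in>{1..N}. frac (x n) \<in> {a..<b}}"
      define A3 where "A3 = {n\<in>{1..N}. frac (x n) \<in> {b..<1}}"
      have un: "{1..N} = (A1 \<union> A2) \<union> A3" unfolding A1_def A2_def A3_def using frac_lt_1 by auto
      have "card ((A1 \<union> A2) \<union> A3) = card (A1 \<union> A2) + card A3"
        using ab by (intro card_Un_disjoint) (auto simp: A1_def A2_def A3_def)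
      also have "card (A1 \<union> A2) = card A1 + card A2"
        using ab by (intro card_Un_disjoint) (auto simp: A1_def A2_def)
      finally have "card {1..N} = card A1 + card A2 + card A3" unfolding un .
      then show ?thesis unfolding cnt_def A1_def A2_def A3_def by simp
    qed
    have each: "\<bar>cnt a b / real N - (b - a)\<bar> \<le> 4 * \<delta>" if ab: "0 \<le> a" "a \<le> b" "b \<le> 1" for a b
    proof -
      have u1: "cnt a b \<le> real N * (b - a + \<gamma>)" using up[of a b] ab by simp
      have u2: "cnt 0 a \<le> real N * (a - 0 + \<gamma>)" using up[of 0 a] ab by simp
      have u3: "cnt b 1 \<le> real N * (1 - b + \<gamma>)" using up[of b 1] ab by simp
      have l: "cnt a b \<ge> real N * (b - a - 2 * \<gamma>)" using part[OF ab] u2 u3 by (simp add: algebra_simps)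
      have NR: "real N > 0" using N by simp
      have "cnt a b / real N \<le> b - a + \<gamma>" using u1 NR by (simp add: field_simps)
      moreover have "cnt a b / real N \<ge> b - a - 2 * \<gamma>" using l NR by (simp add: field_simps)
      moreover have "\<gamma> \<ge> 0" unfolding \<gamma>_def using \<rho> R0 \<eta> \<kappa> by simp
      ultimately show ?thesis using \<gamma> by linarith
    qed
    show "discrepancy N x \<le> 4 * \<delta>"
      unfolding discrepancy_def
    proof (rule cSUP_least)
      show "{(a, b). 0 \<le> a \<and> a \<le> b \<and> b \<le> (1::real)} \<noteq> {}" 
      proof -
        have "(0::real, 0::real) \<in> {(a, b). 0 \<le> a \<and> a \<le> b \<and> b \<le> (1::real)}" by simp
        then show ?thesis by blast
      qed
    next
      fix ab assume "ab \<in> {(a, b). 0 \<le> a \<and> a \<le> b \<and> b \<le> (1::real)}"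
      then show "\<bar>real (card {n \<in> {1..N}. frac (x n) \<in> {fst ab..<snd ab}}) / real N - (snd ab - fst ab)\<bar> \<le> 4 * \<delta>"
        using each[of "fst ab" "snd ab"] unfolding cnt_def by auto
    qed
  qed
qed

lemma ratM_reduce:
  assumes "x \<in> ratM M"
  shows "\<exists>p q :: int. coprime p q \<and> 1 \<le> q \<and> q \<le> int M \<and> x = real_of_int p / real_of_int q"
proof -
  obtain a b :: int where ab: "1 \<le> b" "b \<le> int M" "x = of_int a / of_int b"
    using assms unfolding ratM_def by auto
  define g where "g = gcd a b"
  have g0: "g > 0" unfolding g_def using ab(1) by simp
  define p where "p = a div g"
  define q where "q = b div g"
  have a_eq: "a = p * g" unfolding p_def g_def by simp
  have b_eq: "b = q * g" unfolding q_def g_def by simp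
  have cop: "coprime p q" unfolding p_def q_def g_def using ab(1) by (intro div_gcd_coprime) auto
  have q1: "1 \<le> q"
  proof (rule ccontr)
    assume "\<not> 1 \<le> q"
    then have "q \<le> 0" by simp
    then have "q * g \<le> 0" using g0 by (simp add: mult_nonpos_nonneg)
    then show False using ab(1) b_eq by simp
  qed
  have "q \<le> b" using b_eq g0 q1 by (simp add: mult_le_cancel_left1)
  then have qM: "q \<le> int M" using ab(2) by simp
  have "x = of_int p / of_int q" unfolding ab(3) a_eq b_eq using g0 by simp
  then show ?thesis using cop q1 qM by blast
qed

theorem theorem5:
  fixes \<delta> :: real and d :: nat
  assumes "\<delta> > 0" and "d \<ge> 1"
  shows "\<exists>M::nat. M > 0 \<and>
    (\<forall>\<alpha> :: nat \<Rightarrow> real.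
      \<alpha> d \<noteq> 0 \<longrightarrow>
      (\<forall>\<^sub>F N in sequentially. \<forall>\<eta> :: nat \<Rightarrow> real.
          (\<forall>n\<in>{1..N}. \<bar>\<eta> n\<bar> \<le> \<delta>) \<longrightarrow>
          discrepancy N (\<lambda>n. (\<Sum>k=1..d. \<alpha> k * real n ^ k) + \<eta> n) > 4 * \<delta>) \<longrightarrow>
      (\<forall>\<^sub>F N in sequentially. \<forall>k\<in>{1..d}. \<exists>p q :: int.
          coprime p q \<and> 1 \<le> q \<and> q \<le> int M \<and>
          \<bar>\<alpha> k - real_of_int p / real_of_int q\<bar>
            \<le> real N powr (- (fact (k + 2) / (2 * fact (d + 2))))))"
proof -
  obtain R \<eta> where R: "R \<ge> 1" and \<eta>: "\<eta> > 0" and disc: "\<forall>N\<ge>1. \<forall>x::nat\<Rightarrow>real.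
    (\<forall>h::int. 1 \<le> \<bar>h\<bar> \<and> \<bar>h\<bar> \<le> int R \<longrightarrow> norm (\<Sum>n=1..N. e (of_int h * x n)) \<le> real N * \<eta>)
    \<longrightarrow> discrepancy N x \<le> 4 * \<delta>"
    using disc_main[OF assms(1)] by blast
  obtain M0 where M0: "M0 \<ge> 1" and ac: "\<forall>\<alpha>::nat\<Rightarrow>real. (\<exists>k\<in>{1..d}. \<alpha> k \<notin> ratM M0) \<longrightarrow>
     (\<forall>\<^sub>F N in sequentially. norm (S N (\<lambda>x. \<Sum>k=1..d. \<alpha> k * x ^ k)) \<le> \<eta>)"
    using AC[OF \<eta>, of d] by blast
  define M where "M = M0 * R"
  have Mpos: "M > 0" unfolding M_def using M0 R by simp
  show ?thesis
  proof (intro exI[of _ M] conjI Mpos allI impI)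
    fix \<alpha> :: "nat \<Rightarrow> real"
    assume "\<alpha> d \<noteq> 0"
    assume H1: "\<forall>\<^sub>F N in sequentially. \<forall>\<eta> :: nat \<Rightarrow> real.
          (\<forall>n\<in>{1..N}. \<bar>\<eta> n\<bar> \<le> \<delta>) \<longrightarrow>
          discrepancy N (\<lambda>n. (\<Sum>k=1..d. \<alpha> k * real n ^ k) + \<eta> n) > 4 * \<delta>"
    have allrat: "\<forall>k\<in>{1..d}. \<alpha> k \<in> ratM M"
    proof (rule ccontr)
      assume "\<not> (\<forall>k\<in>{1..d}. \<alpha> k \<in> ratM M)"
      then obtain k where k: "k \<in> {1..d}" "\<alpha> k \<notin> ratM M" by blast
      define Hs where "Hs = {h::int. 1 \<le> \<bar>h\<bar> \<and> \<bar>h\<bar> \<le> int R}"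
      have finH: "finite Hs" unfolding Hs_def by (rule finite_subset[of _ "{- int R..int R}"]) auto
      have evh: "\<forall>h\<in>Hs. \<forall>\<^sub>F N in sequentially. norm (S N (\<lambda>x. \<Sum>k=1..d. (of_int h * \<alpha> k) * x ^ k)) \<le> \<eta>"
      proof
        fix h assume h: "h \<in> Hs"
        have "of_int h * \<alpha> k \<notin> ratM M0"
        proof
          assume "of_int h * \<alpha> k \<in> ratM M0"
          then have "\<alpha> k * of_int h \<in> ratM M0" by (simp add: mult.commute)
          then have "\<alpha> k \<in> ratM (M0 * nat \<bar>h\<bar>)" using h unfolding Hs_def by (intro ratM_mult) auto
          moreover have "M0 * nat \<bar>h\<bar> \<le> M"
          proof -
            have "nat \<bar>h\<bar> \<le> nat (int R)" using h unfolding Hs_def by (intro nat_mono) simp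
            then have "nat \<bar>h\<bar> \<le> R" by simp
            then show ?thesis unfolding M_def by (rule mult_le_mono2)
          qed
          ultimately show False using k ratM_mono by blast
        qed
        then have "\<exists>k'\<in>{1..d}. of_int h * \<alpha> k' \<notin> ratM M0" using k(1) by blast
        then show "\<forall>\<^sub>F N in sequentially. norm (S N (\<lambda>x. \<Sum>k=1..d. (of_int h * \<alpha> k) * x ^ k)) \<le> \<eta>"
          by (rule ac[rule_format])
      qed
      have ev: "\<forall>\<^sub>F N in sequentially. \<forall>h\<in>Hs. norm (S N (\<lambda>x. \<Sum>k=1..d. (of_int h * \<alpha> k) * x ^ k)) \<le> \<eta>"
        by (rule eventually_ball_finite[OF finH evh])
      have "\<forall>\<^sub>F N in sequentially. False"
        using ev H1 eventually_ge_at_top[of "1::nat"]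
      proof eventually_elim
        case (elim N)
        define x where "x n = (\<Sum>k=1..d. \<alpha> k * real n ^ k) + 0" for n :: nat
        have hx: "\<forall>h::int. 1 \<le> \<bar>h\<bar> \<and> \<bar>h\<bar> \<le> int R \<longrightarrow> norm (\<Sum>n=1..N. e (of_int h * x n)) \<le> real N * \<eta>"
        proof (intro allI impI)
          fix h :: int assume "1 \<le> \<bar>h\<bar> \<and> \<bar>h\<bar> \<le> int R"
          then have hH: "h \<in> Hs" unfolding Hs_def by simp
          have eqs: "(\<Sum>n=1..N. e (of_int h * x n)) = of_nat N * S N (\<lambda>x. \<Sum>k=1..d. (of_int h * \<alpha> k) * x ^ k)"
          proof -
            have e1: "(\<Sum>n=1..N. e (of_int h * x n)) = (\<Sum>n=1..N. e (\<Sum>k=1..d. (of_int h * \<alpha> k) * real n ^ k))"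
              unfolding x_def by (simp add: sum_distrib_left mult.assoc)
            have e2: "of_nat N * S N (\<lambda>x. \<Sum>k=1..d. (of_int h * \<alpha> k) * x ^ k) = (\<Sum>n=1..N. e (\<Sum>k=1..d. (of_int h * \<alpha> k) * real n ^ k))"
              unfolding S_def using elim(3) by simp
            show ?thesis unfolding e1 e2 ..
          qed
          show "norm (\<Sum>n=1..N. e (of_int h * x n)) \<le> real N * \<eta>"
            unfolding eqs norm_mult using elim(1) hH by (simp add: mult_left_mono)
        qed
        have "discrepancy N x \<le> 4 * \<delta>" using disc elim(3) hx by blast
        moreover have "discrepancy N x > 4 * \<delta>"
          using elim(2)[rule_format, of "\<lambda>n. 0"] assms(1) unfolding x_def by simp
        ultimately show False by simp
      qed
      then show False by simp
    qed
    have "\<forall>k\<in>{1..d}. \<exists>p q :: int. coprime p q \<and> 1 \<le> q \<and> q \<le> int M \<and> \<alpha> k = real_of_int p / real_of_int q"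
      using allrat ratM_reduce by blast
    then have "\<forall>N. \<forall>k\<in>{1..d}. \<exists>p q :: int.
          coprime p q \<and> 1 \<le> q \<and> q \<le> int M \<and>
          \<bar>\<alpha> k - real_of_int p / real_of_int q\<bar>
            \<le> real N powr (- (fact (k + 2) / (2 * fact (d + 2))))"
      by force
    then show "\<forall>\<^sub>F N in sequentially. \<forall>k\<in>{1..d}. \<exists>p q :: int.
          coprime p q \<and> 1 \<le> q \<and> q \<le> int M \<and>
          \<bar>\<alpha> k - real_of_int p / real_of_int q\<bar>
            \<le> real N powr (- (fact (k + 2) / (2 * fact (d + 2))))"
      by (simp add: always_eventually)
  qed
qed

end
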